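(* Let $\mathbbm k_{\mathrm{loc}}:=\mathbb Z[z^{\pm1}]\big[\tfrac1{1-z^i}:i\in\mathbb Z\setminus\{0\}\big]$. The K-theoretic residue map $\rho_{\mathsf K}\colon\mathbbm k_{\mathrm{loc}}\to\mathbb Z$ (the $z^0$-coefficient of $f_+-f_-$, where $f_+$, $f_-$ are the Laurent expansions of $f$ at $z=0$ and $z=\infty$) vanishes on $\mathbb Z[z^{\pm1}]$ and satisfies, for all integers $n\ge1$, $k\ge0$ and $0\le a<n$, $$\rho\Big(\frac{z^{nk+a}}{(1-z^n)^{k+1}}\Big)=\begin{cases}1&k=a=0,\\0&\text{otherwise}.\end{cases}$$ Moreover, $\rho_{\mathsf K}$ is the unique $\mathbb Z$-linear map $\rho\colon\mathbbm k_{\mathrm{loc}}\to\mathbb Z$ which vanishes on $\mathbb Z[z^{\pm1}]$ and satisfies these identities.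
   Context: These identities arise as the normalization condition $\rho(e(z\otimes\mathcal L)^{-1})=1$ (with $e=\wedge^\bullet_{-1}$) for line bundles $\mathcal L$ on weighted projective spaces $\mathbb P(n,\dots,n)$; a residue map in this sense is what governs the passage from the vertex algebra to the Lie algebra. For $f\in\mathbbm k_{\mathrm{loc}}$ the expansions $f_+\in\mathbb Z(\!(z)\!)$ and $f_-\in\mathbb Z(\!(z^{-1})\!)$ are the usual Laurent expansions of the rational function $f$. *)

theory Defs
  imports "HOL-Computational_Algebra.Fraction_Field"
          "HOL-Computational_Algebra.Formal_Laurent_Series"
begin

type_synonym ratfun = "int poly fract"

definition zvar :: ratfun where
  "zvar = Fraction_Field.Fract [:0, 1:] 1"

inductive_set kloc :: "ratfun set" where
  const: "of_int c \<in> kloc"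
| zv: "zvar \<in> kloc"
| zinv: "inverse zvar \<in> kloc"
| loc: "i \<noteq> 0 \<Longrightarrow> inverse (1 - zvar powi i) \<in> kloc"
| add: "f \<in> kloc \<Longrightarrow> g \<in> kloc \<Longrightarrow> f + g \<in> kloc"
| mult: "f \<in> kloc \<Longrightarrow> g \<in> kloc \<Longrightarrow> f * g \<in> kloc"

definition laurent_polys :: "ratfun set" where
  "laurent_polys = {Fraction_Field.Fract p 1 * zvar powi m | p m. True}"

definition poly_to_fls :: "int poly \<Rightarrow> rat fls" where
  "poly_to_fls p = fps_to_fls (fps_of_poly (map_poly of_int p))"

definition expand0 :: "ratfun \<Rightarrow> rat fls" where
  "expand0 f = (THE L. \<exists>p q. q \<noteq> 0 \<and> f = Fraction_Field.Fract p q \<and> L = poly_to_fls p / poly_to_fls q)"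

definition eval_in_ratfun :: "int poly \<Rightarrow> ratfun \<Rightarrow> ratfun" where
  "eval_in_ratfun p x = poly (map_poly (\<lambda>c. Fraction_Field.Fract [:c:] 1) p) x"

definition subst_inv :: "ratfun \<Rightarrow> ratfun" where
  "subst_inv f = (THE g. \<exists>p q. q \<noteq> 0 \<and> f = Fraction_Field.Fract p q \<and>
      g = eval_in_ratfun p (inverse zvar) / eval_in_ratfun q (inverse zvar))"

text \<open>The z^0 coefficient of f_+ is coefficient 0 of expand0 f; the expansion f_- at
  infinity is the expansion of f(1/w) at w = 0 with w = z^{-1}, so its z^0 coefficient
  is coefficient 0 of expand0 (subst_inv f).\<close>
definition rhoK :: "ratfun \<Rightarrow> rat" where
  "rhoK f = fls_nth (expand0 f) 0 - fls_nth (expand0 (subst_inv f)) 0"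

end

theory Submission imports Defs begin

lemma mp_add: "map_poly (of_int::int\<Rightarrow>rat) (p+q) = map_poly of_int p + map_poly of_int q"
  by (rule poly_eqI) (simp add: coeff_map_poly)

lemma mp_mult: "map_poly (of_int::int\<Rightarrow>rat) (p*q) = map_poly of_int p * map_poly of_int q"
  by (induct p) (simp_all add: map_poly_pCons mp_add map_poly_smult)

lemma mp_eq0: "map_poly (of_int::int\<Rightarrow>rat) p = 0 \<longleftrightarrow> p = 0"
  by (simp add: map_poly_eq_0_iff)

lemma P_add: "poly_to_fls (p+q) = poly_to_fls p + poly_to_fls q"
  by (simp add: poly_to_fls_def mp_add fps_of_poly_add)
lemma P_mult: "poly_to_fls (p*q) = poly_to_fls p * poly_to_fls q"
  by (simp add: poly_to_fls_def mp_mult fps_of_poly_mult fls_times_fps_to_fls)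
lemma P_eq0: "poly_to_fls p = 0 \<longleftrightarrow> p = 0"
  by (simp add: poly_to_fls_def mp_eq0 fps_of_poly_eq_iff[of _ 0, simplified])
lemma P_1: "poly_to_fls 1 = 1" by (simp add: poly_to_fls_def)
lemma P_0: "poly_to_fls 0 = 0" by (simp add: poly_to_fls_def)
lemma P_X: "poly_to_fls [:0,1:] = fls_X" by (simp add: poly_to_fls_def map_poly_pCons)

lemma expand0_Fract: assumes "q \<noteq> 0"
  shows "expand0 (Fraction_Field.Fract p q) = poly_to_fls p / poly_to_fls q"
  unfolding expand0_def
proof (rule the_equality)
  show "\<exists>p' q'. q' \<noteq> 0 \<and> Fraction_Field.Fract p q = Fraction_Field.Fract p' q' \<and>
      poly_to_fls p / poly_to_fls q = poly_to_fls p' / poly_to_fls q'" using assms by blast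
next
  fix L assume "\<exists>p' q'. q' \<noteq> 0 \<and> Fraction_Field.Fract p q = Fraction_Field.Fract p' q' \<and> L = poly_to_fls p' / poly_to_fls q'"
  then obtain p' q' where h: "q' \<noteq> 0" "Fraction_Field.Fract p q = Fraction_Field.Fract p' q'" "L = poly_to_fls p' / poly_to_fls q'" by blast
  have "p * q' = p' * q" using h assms by (simp add: eq_fract)
  hence "poly_to_fls p * poly_to_fls q' = poly_to_fls p' * poly_to_fls q" by (metis P_mult)
  moreover have "poly_to_fls q \<noteq> 0" "poly_to_fls q' \<noteq> 0" using assms h by (simp_all add: P_eq0)
  ultimately show "L = poly_to_fls p / poly_to_fls q" using h by (simp add: frac_eq_eq)
qed


lemma ratfun_rep: obtains p q where "f = Fraction_Field.Fract p q" "q \<noteq> 0"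
  by (cases f) auto

lemma E_add: "expand0 (f + g) = expand0 f + expand0 g"
proof -
  obtain p q where f: "f = Fraction_Field.Fract p q" "q \<noteq> 0" by (rule ratfun_rep)
  obtain r s where g: "g = Fraction_Field.Fract r s" "s \<noteq> 0" by (rule ratfun_rep)
  have "poly_to_fls q \<noteq> 0" "poly_to_fls s \<noteq> 0" using f g by (simp_all add: P_eq0)
  thus ?thesis using f g by (simp add: expand0_Fract P_add P_mult add_frac_eq)
qed

lemma E_mult: "expand0 (f * g) = expand0 f * expand0 g"
proof -
  obtain p q where f: "f = Fraction_Field.Fract p q" "q \<noteq> 0" by (rule ratfun_rep)
  obtain r s where g: "g = Fraction_Field.Fract r s" "s \<noteq> 0" by (rule ratfun_rep)
  have "poly_to_fls q \<noteq> 0" "poly_to_fls s \<noteq> 0" using f g by (simp_all add: P_eq0)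
  thus ?thesis using f g by (simp add: expand0_Fract P_mult)
qed

lemma E_0: "expand0 0 = 0" by (simp add: fract_expand(1) expand0_Fract P_0)

lemma E_inverse: "expand0 (inverse f) = inverse (expand0 f)"
proof -
  obtain p q where f: "f = Fraction_Field.Fract p q" "q \<noteq> 0" by (rule ratfun_rep)
  show ?thesis
  proof (cases "p = 0")
    case True thus ?thesis using f by (simp add: fract_collapse E_0)
  next
    case False thus ?thesis using f by (simp add: expand0_Fract)
  qed
qed

lemma E_1: "expand0 1 = 1" by (simp add: fract_expand(2) expand0_Fract P_1)
lemma E_uminus: "expand0 (- f) = - expand0 f"
  by (metis E_add E_0 add.right_inverse eq_neg_iff_add_eq_0)
lemma E_diff: "expand0 (f - g) = expand0 f - expand0 g"
  by (metis diff_conv_add_uminus E_add E_uminus)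
lemma E_divide: "expand0 (f / g) = expand0 f / expand0 g"
  by (simp only: divide_inverse E_mult E_inverse)
lemma E_power: "expand0 (f ^ n) = expand0 f ^ n"
  by (induct n) (simp_all add: E_1 E_mult)
lemma E_powi: "expand0 (f powi n) = expand0 f powi n"
  by (simp add: power_int_def E_power E_inverse)
lemma E_of_nat: "expand0 (of_nat n) = of_nat n"
  by (induct n) (simp_all add: E_0 E_1 E_add)
lemma E_of_int: "expand0 (of_int n) = of_int n"
proof -
  have h1: "(of_int n :: ratfun) = of_nat (nat n) - of_nat (nat (-n))"
    by (cases "n \<ge> 0") auto
  have h2: "(of_int n :: rat fls) = of_nat (nat n) - of_nat (nat (-n))"
    by (cases "n \<ge> 0") auto
  show ?thesis unfolding h1 h2 by (simp add: E_diff E_of_nat)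
qed
lemma E_z: "expand0 zvar = fls_X"
  by (simp add: zvar_def expand0_Fract P_X P_1)


definition gc :: "int \<Rightarrow> ratfun" where "gc c = Fraction_Field.Fract [:c:] 1"

lemma eval_gc: "eval_in_ratfun p x = poly (map_poly gc p) x"
  unfolding eval_in_ratfun_def gc_def by simp

lemma gc_0: "gc 0 = 0" by (simp add: gc_def fract_collapse)
lemma gc_add: "gc (a + b) = gc a + gc b" by (simp add: gc_def)
lemma gc_mult: "gc (a * b) = gc a * gc b" by (simp add: gc_def ac_simps)
lemma gc_1: "gc 1 = 1" by (metis fract_collapse(2) one_pCons gc_def)
lemma gc_nz: "a \<noteq> 0 \<Longrightarrow> gc a \<noteq> 0" by (simp add: gc_def fract_expand eq_fract)

lemma mg_add: "map_poly gc (p+q) = map_poly gc p + map_poly gc q"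
  by (rule poly_eqI) (simp add: coeff_map_poly gc_0 gc_add)

lemma mg_mult: "map_poly gc (p*q) = map_poly gc p * map_poly gc q"
  by (induct p) (simp_all add: map_poly_pCons mg_add map_poly_smult gc_0 gc_mult)

lemma R_add: "eval_in_ratfun (p+q) x = eval_in_ratfun p x + eval_in_ratfun q x"
  by (simp add: eval_gc mg_add)
lemma R_mult: "eval_in_ratfun (p*q) x = eval_in_ratfun p x * eval_in_ratfun q x"
  by (simp add: eval_gc mg_mult)
lemma R_1: "eval_in_ratfun 1 x = 1"
  by (simp add: eval_gc gc_1)
lemma R_0: "eval_in_ratfun 0 x = 0"
  by (simp add: eval_gc)
lemma R_X: "eval_in_ratfun [:0,1:] x = x"
  by (simp add: eval_gc map_poly_pCons gc_0 gc_1)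

lemma R_zvar: "eval_in_ratfun r zvar = Fraction_Field.Fract r 1"
proof (induct r)
  case 0 thus ?case by (simp add: R_0 fract_collapse)
next
  case (pCons a r)
  have "eval_in_ratfun (pCons a r) zvar = gc a + zvar * eval_in_ratfun r zvar"
    by (simp add: eval_gc map_poly_pCons gc_0)
  also have "\<dots> = Fraction_Field.Fract (pCons a r) 1"
    using pCons(2) by (simp add: gc_def zvar_def)
  finally show ?case .
qed

lemma zvar_nz: "zvar \<noteq> 0" by (simp add: zvar_def fract_expand eq_fract)

lemma R_nz: assumes "q \<noteq> 0" shows "eval_in_ratfun q (inverse zvar) \<noteq> 0"
proof
  assume h: "eval_in_ratfun q (inverse zvar) = 0"
  have "reflect_poly (map_poly gc q) = map_poly gc (reflect_poly q)"
    by (rule poly_eqI) (simp add: coeff_reflect_poly coeff_map_poly gc_0 degree_map_poly gc_nz)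
  hence "eval_in_ratfun (reflect_poly q) zvar = zvar ^ degree (map_poly gc q) * eval_in_ratfun q (inverse zvar)"
    using poly_reflect_poly_nz[OF zvar_nz, of "map_poly gc q"] by (simp add: eval_gc)
  hence "Fraction_Field.Fract (reflect_poly q) 1 = 0" using h by (simp add: R_zvar)
  hence "reflect_poly q = 0" by (simp add: fract_expand eq_fract)
  thus False using assms by simp
qed


abbreviation RR :: "int poly \<Rightarrow> ratfun" where "RR p \<equiv> eval_in_ratfun p (inverse zvar)"

lemma subst_inv_Fract: assumes "q \<noteq> 0"
  shows "subst_inv (Fraction_Field.Fract p q) = RR p / RR q"
  unfolding subst_inv_def
proof (rule the_equality)
  show "\<exists>p' q'. q' \<noteq> 0 \<and> Fraction_Field.Fract p q = Fraction_Field.Fract p' q' \<and>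
      RR p / RR q = RR p' / RR q'" using assms by blast
next
  fix L assume "\<exists>p' q'. q' \<noteq> 0 \<and> Fraction_Field.Fract p q = Fraction_Field.Fract p' q' \<and> L = RR p' / RR q'"
  then obtain p' q' where h: "q' \<noteq> 0" "Fraction_Field.Fract p q = Fraction_Field.Fract p' q'" "L = RR p' / RR q'" by blast
  have "p * q' = p' * q" using h assms by (simp add: eq_fract)
  hence "RR p * RR q' = RR p' * RR q" by (metis R_mult)
  moreover have "RR q \<noteq> 0" "RR q' \<noteq> 0" using assms h by (simp_all add: R_nz)
  ultimately show "L = RR p / RR q" using h by (simp add: frac_eq_eq)
qed

lemma S_add: "subst_inv (f + g) = subst_inv f + subst_inv g"
proof -
  obtain p q where f: "f = Fraction_Field.Fract p q" "q \<noteq> 0" by (rule ratfun_rep)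
  obtain r s where g: "g = Fraction_Field.Fract r s" "s \<noteq> 0" by (rule ratfun_rep)
  have "RR q \<noteq> 0" "RR s \<noteq> 0" using f g by (simp_all add: R_nz)
  thus ?thesis using f g by (simp add: subst_inv_Fract R_add R_mult add_frac_eq)
qed

lemma S_mult: "subst_inv (f * g) = subst_inv f * subst_inv g"
proof -
  obtain p q where f: "f = Fraction_Field.Fract p q" "q \<noteq> 0" by (rule ratfun_rep)
  obtain r s where g: "g = Fraction_Field.Fract r s" "s \<noteq> 0" by (rule ratfun_rep)
  have "RR q \<noteq> 0" "RR s \<noteq> 0" using f g by (simp_all add: R_nz)
  thus ?thesis using f g by (simp add: subst_inv_Fract R_mult)
qed

lemma S_0: "subst_inv 0 = 0" by (subst fract_expand(1), subst subst_inv_Fract) (simp_all add: R_0)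
lemma S_1: "subst_inv 1 = 1" by (simp add: fract_expand(2) subst_inv_Fract R_1)

lemma S_inverse: "subst_inv (inverse f) = inverse (subst_inv f)"
proof -
  obtain p q where f: "f = Fraction_Field.Fract p q" "q \<noteq> 0" by (rule ratfun_rep)
  show ?thesis
  proof (cases "p = 0")
    case True thus ?thesis using f by (simp add: fract_collapse S_0)
  next
    case False thus ?thesis using f by (simp add: subst_inv_Fract)
  qed
qed

lemma S_uminus: "subst_inv (- f) = - subst_inv f"
  by (metis S_add S_0 add.right_inverse eq_neg_iff_add_eq_0)
lemma S_diff: "subst_inv (f - g) = subst_inv f - subst_inv g"
  by (metis diff_conv_add_uminus S_add S_uminus)
lemma S_divide: "subst_inv (f / g) = subst_inv f / subst_inv g"
  by (simp only: divide_inverse S_mult S_inverse)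
lemma S_power: "subst_inv (f ^ n) = subst_inv f ^ n"
  by (induct n) (simp_all add: S_1 S_mult)
lemma S_powi: "subst_inv (f powi n) = subst_inv f powi n"
  by (simp add: power_int_def S_power S_inverse)
lemma S_of_nat: "subst_inv (of_nat n) = of_nat n"
  by (induct n) (simp_all add: S_0 S_1 S_add)
lemma S_of_int: "subst_inv (of_int n) = of_int n"
proof -
  have h1: "(of_int n :: ratfun) = of_nat (nat n) - of_nat (nat (-n))"
    by (cases "n \<ge> 0") auto
  show ?thesis unfolding h1 by (simp add: S_diff S_of_nat)
qed
lemma S_z: "subst_inv zvar = inverse zvar"
  by (simp add: zvar_def subst_inv_Fract R_X R_1)

lemma rho_add: "rhoK (f + g) = rhoK f + rhoK g"
  by (simp add: rhoK_def E_add S_add)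
lemma rho_scal: "rhoK (of_int c * f) = of_int c * rhoK f"
  by (simp add: rhoK_def E_mult S_mult E_of_int S_of_int algebra_simps)


lemma coeff0_E: assumes "coeff q 0 \<noteq> 0"
  shows "fls_nth (expand0 (Fraction_Field.Fract p q)) 0 = of_int (coeff p 0) / of_int (coeff q 0)"
proof -
  have q: "q \<noteq> 0" using assms by auto
  define A where "A = fps_of_poly (map_poly (of_int::int\<Rightarrow>rat) p)"
  define B where "B = fps_of_poly (map_poly (of_int::int\<Rightarrow>rat) q)"
  have B0: "B $ 0 \<noteq> 0" using assms by (simp add: B_def coeff_map_poly)
  have "expand0 (Fraction_Field.Fract p q) = fps_to_fls A / fps_to_fls B"
    using q by (simp add: expand0_Fract poly_to_fls_def A_def B_def)
  also have "\<dots> = fps_to_fls (A / B)"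
    by (rule fls_divide_fps_to_fls) (simp add: B0)
  finally have "fls_nth (expand0 (Fraction_Field.Fract p q)) 0 = (A / B) $ 0" by simp
  also have "\<dots> = A $ 0 / B $ 0" using B0 by (simp add: fps_divide_unit divide_inverse)
  finally show ?thesis by (simp add: A_def B_def coeff_map_poly)
qed

lemma rho_zpowi: "rhoK (zvar powi m) = 0"
  by (simp add: rhoK_def E_powi S_powi E_z S_z E_inverse power_int_inverse fls_inverse_X_intpow)


lemma Fract_pCons: "Fraction_Field.Fract (pCons a p) 1 = of_int a + zvar * Fraction_Field.Fract p 1"
proof -
  have "(of_int a :: ratfun) = Fraction_Field.Fract [:a:] 1"
  proof (induct a rule: int_induct[where k=0])
    case base thus ?case by (simp add: fract_collapse)
  next
    case (step1 i) thus ?case by (simp add: One_fract_def one_pCons)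
  next
    case (step2 i) thus ?case by (simp add: One_fract_def one_pCons diff_pCons)
  qed
  thus ?thesis by (simp add: zvar_def)
qed

lemma rho_laurent_aux: "rhoK (Fraction_Field.Fract p 1 * zvar powi m) = 0"
proof (induct p arbitrary: m)
  case 0 thus ?case by (simp add: fract_collapse rhoK_def E_0 S_0)
next
  case (pCons a p)
  have "Fraction_Field.Fract (pCons a p) 1 * zvar powi m
        = of_int a * zvar powi m + Fraction_Field.Fract p 1 * zvar powi (m + 1)"
    by (simp add: Fract_pCons algebra_simps power_int_add zvar_nz)
  thus ?case by (simp add: rho_add rho_scal rho_zpowi pCons(2))
qed

lemma rho_laurent: "f \<in> laurent_polys \<Longrightarrow> rhoK f = 0"
  unfolding laurent_polys_def using rho_laurent_aux by auto


lemma Fract_pow: "Fraction_Field.Fract a 1 ^ n = Fraction_Field.Fract (a ^ n) 1"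
  by (induct n) (simp_all add: fract_collapse)

lemma zpow: "zvar ^ j = Fraction_Field.Fract ([:0,1:] ^ j) 1"
  by (simp add: zvar_def Fract_pow)

lemma basis_Fract:
  "zvar ^ j / (1 - zvar ^ n) ^ m = Fraction_Field.Fract ([:0,1:] ^ j) ((1 - [:0,1:] ^ n) ^ m)"
  by (simp add: zpow One_fract_def Fract_pow)

lemma basis_inv_Fract:
  "zvar ^ j / (zvar ^ n - 1) ^ m = Fraction_Field.Fract ([:0,1:] ^ j) (([:0,1:] ^ n - 1) ^ m)"
  by (simp add: zpow One_fract_def Fract_pow)

lemma basis_E: assumes "n \<ge> 1"
  shows "fls_nth (expand0 (zvar ^ (n*k+a) / (1 - zvar ^ n) ^ (k+1))) 0 = (if k = 0 \<and> a = 0 then 1 else 0)"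
proof -
  have c: "coeff ((1 - [:0,1:] ^ n) ^ (k+1) :: int poly) 0 = 1"
    using assms by (simp add: poly_0_coeff_0[symmetric] power_0_left)
  have d: "coeff ([:0,1:] ^ (n*k+a) :: int poly) 0 = (if k = 0 \<and> a = 0 then 1 else 0)"
    using assms by (simp add: poly_0_coeff_0[symmetric])
  show ?thesis unfolding basis_Fract using c d by (simp add: coeff0_E)
qed

lemma basis_S: assumes "n \<ge> 1" "a < n"
  shows "fls_nth (expand0 (subst_inv (zvar ^ (n*k+a) / (1 - zvar ^ n) ^ (k+1)))) 0 = 0"
proof -
  have zn: "zvar ^ n - 1 \<noteq> 0"
  proof
    assume "zvar ^ n - 1 = 0"
    hence "Fraction_Field.Fract ([:0,1:] ^ n - 1 :: int poly) 1 = 0" by (simp add: zpow One_fract_def)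
    hence "([:0,1:] ^ n - 1 :: int poly) = 0" by (simp add: fract_expand eq_fract)
    hence "poly ([:0,1:] ^ n - 1 :: int poly) 0 = 0" by simp
    thus False using assms by (simp add: power_0_left)
  qed
  have eq: "subst_inv (zvar ^ (n*k+a) / (1 - zvar ^ n) ^ (k+1)) = zvar ^ (n - a) / (zvar ^ n - 1) ^ (k+1)"
  proof -
    have "subst_inv (zvar ^ (n*k+a) / (1 - zvar ^ n) ^ (k+1))
        = inverse zvar ^ (n*k+a) / (1 - inverse zvar ^ n) ^ (k+1)"
      by (simp only: S_divide S_power S_diff S_1 S_z)
    also have "(1 - inverse zvar ^ n) = (zvar ^ n - 1) / zvar ^ n"
      using zvar_nz by (simp add: field_simps)
    also have "inverse zvar ^ (n*k+a) / ((zvar ^ n - 1) / zvar ^ n) ^ (k+1)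
       = (zvar ^ n) ^ (k+1) / (zvar ^ (n*k+a) * (zvar ^ n - 1) ^ (k+1))"
      using zvar_nz zn by (simp add: power_divide power_mult field_simps)
    also have "(zvar ^ n) ^ (k+1) = zvar ^ (n*k+a) * zvar ^ (n - a)"
      using assms by (simp add: power_mult[symmetric] power_add[symmetric] algebra_simps)
    finally show ?thesis using zvar_nz by simp
  qed
  have c: "coeff (([:0,1:] ^ n - 1) ^ (k+1) :: int poly) 0 = (-1) ^ (k+1)"
    using assms by (simp add: poly_0_coeff_0[symmetric] power_0_left)
  have d: "coeff ([:0,1:] ^ (n - a) :: int poly) 0 = 0"
    using assms by (simp add: poly_0_coeff_0[symmetric])
  show ?thesis unfolding eq basis_inv_Fract using c d by (simp add: coeff0_E)
qed

lemma rho_basis: assumes "n \<ge> 1" "a < n"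
  shows "rhoK (zvar ^ (n*k+a) / (1 - zvar ^ n) ^ (k+1)) = (if k = 0 \<and> a = 0 then 1 else 0)"
  using basis_E[OF assms(1)] basis_S[OF assms] by (simp add: rhoK_def)


lemma of_int_Fract: "(of_int a :: ratfun) = Fraction_Field.Fract [:a:] 1"
proof (induct a rule: int_induct[where k=0])
  case base thus ?case by (simp add: fract_collapse)
next
  case (step1 i) thus ?case by (simp add: One_fract_def one_pCons)
next
  case (step2 i) thus ?case by (simp add: One_fract_def one_pCons diff_pCons)
qed

lemma zpowi_add: "zvar powi (a + b) = zvar powi a * zvar powi b"
  using zvar_nz by (simp add: power_int_add)

lemma lp_mem: "Fraction_Field.Fract p 1 * zvar powi m \<in> laurent_polys"
  by (auto simp: laurent_polys_def)

lemma lp_Fract: "Fraction_Field.Fract p 1 \<in> laurent_polys"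
  using lp_mem[of p 0] by simp

lemma lp_zpowi: "zvar powi e \<in> laurent_polys"
  using lp_mem[of 1 e] by (simp add: fract_collapse)

lemma lp_of_int: "of_int c \<in> laurent_polys"
  by (simp add: of_int_Fract lp_Fract)

lemma lp_mult: assumes "f \<in> laurent_polys" "g \<in> laurent_polys" shows "f * g \<in> laurent_polys"
proof -
  obtain p m where f: "f = Fraction_Field.Fract p 1 * zvar powi m" using assms(1) by (auto simp: laurent_polys_def)
  obtain q m' where g: "g = Fraction_Field.Fract q 1 * zvar powi m'" using assms(2) by (auto simp: laurent_polys_def)
  have "f * g = Fraction_Field.Fract (p*q) 1 * zvar powi (m + m')"
    by (simp add: f g zpowi_add)
  thus ?thesis by (simp add: lp_mem)
qed

lemma lp_shift: "Fraction_Field.Fract p 1 * zvar powi m = Fraction_Field.Fract (p * [:0,1:] ^ k) 1 * zvar powi (m - int k)"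
proof -
  have "zvar powi m = zvar ^ k * zvar powi (m - int k)"
    using zpowi_add[of "int k" "m - int k"] by simp
  thus ?thesis by (simp add: zpow)
qed

lemma lp_add: assumes "f \<in> laurent_polys" "g \<in> laurent_polys" shows "f + g \<in> laurent_polys"
proof -
  obtain p m where f: "f = Fraction_Field.Fract p 1 * zvar powi m" using assms(1) by (auto simp: laurent_polys_def)
  obtain q m' where g: "g = Fraction_Field.Fract q 1 * zvar powi m'" using assms(2) by (auto simp: laurent_polys_def)
  define d where "d = min m m'"
  have f': "f = Fraction_Field.Fract (p * [:0,1:] ^ nat (m - d)) 1 * zvar powi d"
    using lp_shift[of p m "nat (m - d)"] f by (simp add: d_def)
  have g': "g = Fraction_Field.Fract (q * [:0,1:] ^ nat (m' - d)) 1 * zvar powi d"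
    using lp_shift[of q m' "nat (m' - d)"] g by (simp add: d_def)
  have "f + g = Fraction_Field.Fract (p * [:0,1:] ^ nat (m - d) + q * [:0,1:] ^ nat (m' - d)) 1 * zvar powi d"
  proof -
    have "\<And>a b. Fraction_Field.Fract a 1 + Fraction_Field.Fract b 1 = Fraction_Field.Fract (a + b) (1::int poly)"
      by simp
    thus ?thesis unfolding f' g' by (metis distrib_right)
  qed
  thus ?thesis by (simp add: lp_mem)
qed

lemma lp_power: "f \<in> laurent_polys \<Longrightarrow> f ^ k \<in> laurent_polys"
  by (induct k) (simp_all add: lp_mult lp_of_int[of 1, simplified])

lemma lp_uminus: "f \<in> laurent_polys \<Longrightarrow> - f \<in> laurent_polys"
  using lp_mult[OF lp_of_int[of "-1"]] by simp

lemma lp_zpow: "zvar ^ k \<in> laurent_polys"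
  using lp_zpowi[of "int k"] by simp

lemma one_minus_nz: "n \<ge> 1 \<Longrightarrow> 1 - zvar ^ n \<noteq> 0"
proof
  assume "n \<ge> 1" "1 - zvar ^ n = 0"
  hence "Fraction_Field.Fract (1 - [:0,1:] ^ n :: int poly) 1 = 0" by (simp add: zpow One_fract_def)
  hence "(1 - [:0,1:] ^ n :: int poly) = 0" by (simp add: fract_expand eq_fract)
  hence "poly (1 - [:0,1:] ^ n :: int poly) 0 = 0" by simp
  thus False using \<open>n \<ge> 1\<close> by (simp add: power_0_left)
qed

lemma factor_nat: "\<exists>w\<in>laurent_polys. 1 - (zvar ^ N) ^ k = (1 - zvar ^ N) * w"
proof (induct k)
  case 0 thus ?case using lp_of_int[of 0] by auto
next
  case (Suc k)
  then obtain w where w: "w \<in> laurent_polys" "1 - (zvar ^ N) ^ k = (1 - zvar ^ N) * w" by blast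
  have "1 - (zvar ^ N) ^ Suc k = (1 - zvar ^ N) * (w + (zvar ^ N) ^ k)"
    using w(2) by (simp add: algebra_simps)
  moreover have "w + (zvar ^ N) ^ k \<in> laurent_polys"
    using w(1) by (simp add: lp_add lp_power lp_zpow)
  ultimately show ?case by blast
qed

lemma factor_int: "\<exists>w\<in>laurent_polys. 1 - (zvar ^ N) powi q = (1 - zvar ^ N) * w"
proof (cases "q \<ge> 0")
  case True
  then obtain k where "q = int k" by (metis nonneg_int_cases)
  thus ?thesis using factor_nat[of N k] by simp
next
  case False
  then have "- q \<ge> 0" by simp
  then obtain k where "- q = int k" by (metis nonneg_int_cases)
  hence q: "q = - int k" by simp
  obtain w where w: "w \<in> laurent_polys" "1 - (zvar ^ N) ^ k = (1 - zvar ^ N) * w"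
    using factor_nat[of N k] by blast
  have v: "(zvar ^ N) ^ k \<noteq> 0" using zvar_nz by simp
  have iv: "inverse ((zvar ^ N) ^ k) = zvar powi (- int (N * k))"
  proof -
    have "zvar powi (int (N * k)) = (zvar ^ N) ^ k" by (simp only: power_int_of_nat power_mult)
    thus ?thesis by (simp only: power_int_minus)
  qed
  have "1 - (zvar ^ N) powi q = 1 - inverse ((zvar ^ N) ^ k)"
    by (simp add: q power_int_minus)
  also have "\<dots> = - (1 - (zvar ^ N) ^ k) * inverse ((zvar ^ N) ^ k)"
    using v by (simp add: algebra_simps)
  also have "\<dots> = (1 - zvar ^ N) * (- (w * inverse ((zvar ^ N) ^ k)))"
    using w(2) by simp
  finally have "1 - (zvar ^ N) powi q = (1 - zvar ^ N) * (- (w * inverse ((zvar ^ N) ^ k)))" .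
  moreover have "- (w * inverse ((zvar ^ N) ^ k)) \<in> laurent_polys"
    unfolding iv by (intro lp_uminus lp_mult w(1) lp_zpowi)
  ultimately show ?thesis by blast
qed


inductive_set spanS :: "ratfun set" where
  sl: "f \<in> laurent_polys \<Longrightarrow> f \<in> spanS"
| sb: "n \<ge> 1 \<Longrightarrow> a < n \<Longrightarrow> zvar ^ (n*k+a) / (1 - zvar ^ n) ^ (k+1) \<in> spanS"
| sadd: "f \<in> spanS \<Longrightarrow> g \<in> spanS \<Longrightarrow> f + g \<in> spanS"
| sscal: "f \<in> spanS \<Longrightarrow> of_int c * f \<in> spanS"

lemma s_diff: "f \<in> spanS \<Longrightarrow> g \<in> spanS \<Longrightarrow> f - g \<in> spanS"
  using sadd[OF _ sscal[of g "-1"]] by simp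

lemma field_aux: fixes x v w1 w2 Dm :: ratfun
  assumes "v \<noteq> 0" "Dm \<noteq> 0"
  shows "x*(1 - v*w1)/(v*Dm) = x*(1 - v*w2)/(v*Dm) + x*w2/Dm - x*w1/Dm"
  using assms by (simp add: field_simps)

lemma zpowi_decomp: assumes "N \<ge> 1"
  shows "zvar powi e = zvar ^ nat (e mod int N) * (zvar ^ N) powi (e div int N)"
proof -
  have m: "e mod int N \<ge> 0" using assms by simp
  have "e = e mod int N + int N * (e div int N)" by simp
  hence "zvar powi e = zvar powi (e mod int N) * zvar powi (int N * (e div int N))"
    by (metis zpowi_add)
  also have "zvar powi (e mod int N) = zvar ^ nat (e mod int N)"
    using m by (metis power_int_of_nat nat_0_le)
  also have "zvar powi (int N * (e div int N)) = (zvar ^ N) powi (e div int N)"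
    by (simp add: power_int_mult)
  finally show ?thesis .
qed

lemma mod_lt: assumes "N \<ge> 1" shows "nat (e mod int N) < N"
proof -
  have "e mod int N < int N" "e mod int N \<ge> 0" using assms by simp_all
  thus ?thesis by (simp add: nat_less_iff)
qed

lemma span_frac: assumes N: "N \<ge> 1"
  shows "g \<in> laurent_polys \<Longrightarrow> g / (1 - zvar ^ N) ^ m \<in> spanS"
proof (induct m arbitrary: g)
  case 0 thus ?case by (simp add: sl)
next
  case (Suc m)
  let ?u = "zvar ^ N"
  let ?D = "(1 - ?u) ^ Suc m"
  have v: "1 - ?u \<noteq> 0" using one_minus_nz[OF N] .
  have Dm: "(1 - ?u) ^ m \<noteq> 0" using v by simp
  have mono: "zvar powi e / ?D \<in> spanS" for e
  proof -
    define a where "a = nat (e mod int N)"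
    define q where "q = e div int N"
    have a: "a < N" using mod_lt[OF N] a_def by simp
    have ze: "zvar powi e = zvar ^ a * ?u powi q" using zpowi_decomp[OF N] a_def q_def by simp
    obtain w1 where w1: "w1 \<in> laurent_polys" "1 - ?u powi q = (1 - ?u) * w1" using factor_int by blast
    obtain w2 where w2: "w2 \<in> laurent_polys" "1 - ?u ^ m = (1 - ?u) * w2" using factor_nat[of N m] by blast
    have e1: "zvar powi e = zvar ^ a * (1 - (1 - ?u) * w1)" using ze w1(2) by (simp add: algebra_simps)
    have e2: "zvar ^ (N*m+a) = zvar ^ a * (1 - (1 - ?u) * w2)" using w2(2)
      by (simp add: power_add power_mult algebra_simps)
    have "zvar powi e / ?D = zvar ^ (N*m+a) / (1 - zvar ^ N) ^ (m+1) + (zvar ^ a * w2) / (1 - ?u) ^ m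
           - (zvar ^ a * w1) / (1 - ?u) ^ m"
      unfolding e1 e2 using field_aux[OF v Dm, of "zvar ^ a" w1 w2] by simp
    moreover have "zvar ^ (N*m+a) / (1 - zvar ^ N) ^ (m+1) \<in> spanS" using sb[OF N a] .
    moreover have "(zvar ^ a * w2) / (1 - ?u) ^ m \<in> spanS" by (rule Suc(1)) (simp add: lp_mult lp_zpow w2(1))
    moreover have "(zvar ^ a * w1) / (1 - ?u) ^ m \<in> spanS" by (rule Suc(1)) (simp add: lp_mult lp_zpow w1(1))
    ultimately show ?thesis by (metis s_diff sadd)
  qed
  obtain p e where g: "g = Fraction_Field.Fract p 1 * zvar powi e" using Suc(2) by (auto simp: laurent_polys_def)
  have "Fraction_Field.Fract p 1 * zvar powi e / ?D \<in> spanS"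
  proof (induct p arbitrary: e)
    case 0 thus ?case using sl[OF lp_of_int[of 0]] by (simp add: fract_collapse)
  next
    case (pCons a p)
    have "Fraction_Field.Fract (pCons a p) 1 * zvar powi e / ?D
        = of_int a * (zvar powi e / ?D) + Fraction_Field.Fract p 1 * zvar powi (e + 1) / ?D"
      by (simp add: Fract_pCons algebra_simps add_divide_distrib power_int_add zvar_nz)
    thus ?case using pCons(2) mono by (metis sadd sscal)
  qed
  thus ?case using g by simp
qed


definition inT :: "ratfun \<Rightarrow> bool" where
  "inT f \<longleftrightarrow> (\<exists>N m. N \<ge> 1 \<and> f * (1 - zvar ^ N) ^ m \<in> laurent_polys)"

lemma inT_span: "inT f \<Longrightarrow> f \<in> spanS"
proof -
  assume "inT f"
  then obtain N m where N: "N \<ge> 1" and h: "f * (1 - zvar ^ N) ^ m \<in> laurent_polys" by (auto simp: inT_def)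
  have "(1 - zvar ^ N) ^ m \<noteq> 0" using one_minus_nz[OF N] by simp
  hence "f = f * (1 - zvar ^ N) ^ m / (1 - zvar ^ N) ^ m" by simp
  thus ?thesis using span_frac[OF N h] by metis
qed

lemma inT_LP: "f \<in> laurent_polys \<Longrightarrow> inT f"
  unfolding inT_def by (rule exI[of _ 1], rule exI[of _ 0]) simp

lemma inT_addmult: assumes "inT f" "inT g" shows "inT (f + g) \<and> inT (f * g)"
proof -
  obtain N m where N: "N \<ge> 1" and A: "f * (1 - zvar ^ N) ^ m \<in> laurent_polys" using assms(1) by (auto simp: inT_def)
  obtain M m' where M: "M \<ge> 1" and B: "g * (1 - zvar ^ M) ^ m' \<in> laurent_polys" using assms(2) by (auto simp: inT_def)
  define D where "D = 1 - zvar ^ (N * M)"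
  obtain w1 where w1: "w1 \<in> laurent_polys" "1 - (zvar ^ N) ^ M = (1 - zvar ^ N) * w1" using factor_nat by blast
  obtain w2 where w2: "w2 \<in> laurent_polys" "1 - (zvar ^ M) ^ N = (1 - zvar ^ M) * w2" using factor_nat by blast
  have D1: "D = (1 - zvar ^ N) * w1" using w1(2) by (simp add: D_def power_mult)
  have D2: "D = (1 - zvar ^ M) * w2" using w2(2) by (simp add: D_def power_mult[symmetric] mult.commute)
  have DL: "D \<in> laurent_polys" unfolding D_def
    by (metis diff_conv_add_uminus lp_add lp_of_int lp_uminus lp_zpow of_int_1)
  have Dm: "D ^ m = (1 - zvar ^ N) ^ m * w1 ^ m" by (simp add: D1 power_mult_distrib)
  have Dm': "D ^ m' = (1 - zvar ^ M) ^ m' * w2 ^ m'" by (simp add: D2 power_mult_distrib)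
  have NM: "N * M \<ge> 1" using N M by simp
  have "(f + g) * D ^ (m + m') = f * D ^ m * D ^ m' + g * D ^ m' * D ^ m"
    by (simp add: power_add algebra_simps)
  also have "\<dots> = (f * (1 - zvar ^ N) ^ m) * w1 ^ m * D ^ m' + (g * (1 - zvar ^ M) ^ m') * w2 ^ m' * D ^ m"
    unfolding Dm Dm' by (simp add: algebra_simps)
  finally have "(f + g) * D ^ (m + m') \<in> laurent_polys"
    using A B w1(1) w2(1) DL by (simp add: lp_add lp_mult lp_power)
  hence 1: "inT (f + g)" unfolding inT_def D_def using NM by blast
  have "(f * g) * D ^ (m + m') = f * D ^ m * (g * D ^ m')"
    by (simp add: power_add algebra_simps)
  also have "\<dots> = (f * (1 - zvar ^ N) ^ m) * w1 ^ m * ((g * (1 - zvar ^ M) ^ m') * w2 ^ m')"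
    unfolding Dm Dm' by (simp add: algebra_simps)
  finally have eq: "(f * g) * D ^ (m + m') = (f * (1 - zvar ^ N) ^ m) * w1 ^ m * ((g * (1 - zvar ^ M) ^ m') * w2 ^ m')" .
  have "(f * g) * D ^ (m + m') \<in> laurent_polys"
    unfolding eq by (intro lp_mult lp_power A B w1(1) w2(1))
  hence 2: "inT (f * g)" unfolding inT_def D_def using NM by blast
  show ?thesis using 1 2 by blast
qed

lemma kloc_inT: "f \<in> kloc \<Longrightarrow> inT f"
proof (induct rule: kloc.induct)
  case (const c) thus ?case by (rule inT_LP[OF lp_of_int])
next
  case zv thus ?case using inT_LP[OF lp_zpowi[of 1]] by simp
next
  case zinv thus ?case using inT_LP[OF lp_zpowi[of "-1"]] by (simp add: power_int_minus)
next
  case (loc i)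
  show ?case
  proof (cases "i > 0")
    case True
    then obtain n where n: "i = int n" "n \<ge> 1" by (metis int_one_le_iff_zero_less nonneg_int_cases less_imp_le of_nat_le_iff of_nat_1)
    have "inverse (1 - zvar powi i) * (1 - zvar ^ n) ^ 1 = 1" using one_minus_nz[OF n(2)] n(1) by simp
    thus ?thesis unfolding inT_def using n(2) lp_of_int[of 1] by (metis of_int_1)
  next
    case False
    hence "- i > 0" using loc by simp
    then obtain n where n: "- i = int n" "n \<ge> 1" by (metis int_one_le_iff_zero_less nonneg_int_cases less_imp_le of_nat_le_iff of_nat_1)
    have i: "i = - int n" using n by simp
    have u: "zvar ^ n \<noteq> 0" using zvar_nz by simp
    have v: "1 - zvar ^ n \<noteq> 0" using one_minus_nz[OF n(2)] .
    have "inverse (1 - zvar powi i) * (1 - zvar ^ n) ^ 1 = - (zvar ^ n)"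
      using u v unfolding i by (simp add: power_int_minus field_simps)
    thus ?thesis unfolding inT_def using n(2) lp_uminus[OF lp_zpow[of n]] by metis
  qed
next
  case (add f g) thus ?case using inT_addmult by blast
next
  case (mult f g) thus ?case using inT_addmult by blast
qed


lemma kloc_Fract: "Fraction_Field.Fract p 1 \<in> kloc"
proof (induct p)
  case 0 thus ?case using kloc.const[of 0] by (simp add: fract_collapse)
next
  case (pCons a p) thus ?case unfolding Fract_pCons by (intro kloc.add kloc.mult kloc.const kloc.zv)
qed

lemma kloc_power: "f \<in> kloc \<Longrightarrow> f ^ k \<in> kloc"
  by (induct k) (use kloc.const[of 1] in \<open>simp_all add: kloc.mult\<close>)

lemma kloc_zpowi: "zvar powi e \<in> kloc"
proof (cases "e \<ge> 0")
  case True
  then obtain k where "e = int k" by (metis nonneg_int_cases)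
  thus ?thesis by (simp add: kloc_power kloc.zv)
next
  case False
  then have "- e \<ge> 0" by simp
  then obtain k where "- e = int k" by (metis nonneg_int_cases)
  hence "e = - int k" by simp
  thus ?thesis by (simp add: power_int_minus power_inverse[symmetric] kloc_power kloc.zinv)
qed

lemma LP_kloc: "f \<in> laurent_polys \<Longrightarrow> f \<in> kloc"
  unfolding laurent_polys_def by (auto intro: kloc.mult kloc_Fract kloc_zpowi)

lemma span_kloc: "f \<in> spanS \<Longrightarrow> f \<in> kloc"
proof (induct rule: spanS.induct)
  case (sl f) thus ?case by (rule LP_kloc)
next
  case (sb n a k)
  have "inverse (1 - zvar powi int n) \<in> kloc" using sb by (intro kloc.loc) simp
  hence "zvar ^ (n*k+a) * inverse (1 - zvar ^ n) ^ (k+1) \<in> kloc"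
    by (simp add: kloc.mult kloc_power kloc.zv)
  thus ?case by (simp add: divide_inverse power_inverse)
next
  case (sadd f g) show ?case using sadd(2,4) by (rule kloc.add)
next
  case (sscal f c) thus ?case by (intro kloc.mult kloc.const)
qed

lemma kloc_span: "f \<in> kloc \<Longrightarrow> f \<in> spanS"
  using kloc_inT inT_span by blast

theorem propositionA1:
  shows "(\<forall>f\<in>kloc. rhoK f \<in> \<int>)
    \<and> (\<forall>f\<in>laurent_polys. rhoK f = 0)
    \<and> (\<forall>(n::nat) (k::nat) (a::nat). n \<ge> 1 \<longrightarrow> a < n \<longrightarrow>
          rhoK (zvar ^ (n * k + a) / (1 - zvar ^ n) ^ (k + 1)) = (if k = 0 \<and> a = 0 then 1 else 0))
    \<and> (\<forall>\<rho> :: ratfun \<Rightarrow> int.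
          (\<forall>f\<in>kloc. \<forall>g\<in>kloc. \<rho> (f + g) = \<rho> f + \<rho> g)
        \<longrightarrow> (\<forall>f\<in>kloc. \<forall>c::int. \<rho> (of_int c * f) = c * \<rho> f)
        \<longrightarrow> (\<forall>f\<in>laurent_polys. \<rho> f = 0)
        \<longrightarrow> (\<forall>(n::nat) (k::nat) (a::nat). n \<ge> 1 \<longrightarrow> a < n \<longrightarrow>
              \<rho> (zvar ^ (n * k + a) / (1 - zvar ^ n) ^ (k + 1)) = (if k = 0 \<and> a = 0 then 1 else 0))
        \<longrightarrow> (\<forall>f\<in>kloc. of_int (\<rho> f) = rhoK f))"
proof (intro conjI allI impI ballI)
  fix f assume "f \<in> kloc"
  hence "f \<in> spanS" by (rule kloc_span)
  thus "rhoK f \<in> \<int>"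
  proof (induct rule: spanS.induct)
    case (sl f) thus ?case by (simp add: rho_laurent)
  next
    case (sb n a k) show ?case unfolding rho_basis[OF sb(1,2)] by simp
  next
    case (sadd f g) thus ?case by (simp add: rho_add)
  next
    case (sscal f c) thus ?case by (simp add: rho_scal)
  qed
next
  fix f assume "f \<in> laurent_polys" thus "rhoK f = 0" by (rule rho_laurent)
next
  fix n k a :: nat assume "n \<ge> 1" "a < n"
  thus "rhoK (zvar ^ (n * k + a) / (1 - zvar ^ n) ^ (k + 1)) = (if k = 0 \<and> a = 0 then 1 else 0)"
    by (rule rho_basis)
next
  fix \<rho> :: "ratfun \<Rightarrow> int" and f
  assume add: "\<forall>f\<in>kloc. \<forall>g\<in>kloc. \<rho> (f + g) = \<rho> f + \<rho> g"
    and scal: "\<forall>f\<in>kloc. \<forall>c::int. \<rho> (of_int c * f) = c * \<rho> f"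
    and lp: "\<forall>f\<in>laurent_polys. \<rho> f = 0"
    and bas: "\<forall>(n::nat) (k::nat) (a::nat). n \<ge> 1 \<longrightarrow> a < n \<longrightarrow>
              \<rho> (zvar ^ (n * k + a) / (1 - zvar ^ n) ^ (k + 1)) = (if k = 0 \<and> a = 0 then 1 else 0)"
    and f: "f \<in> kloc"
  from f have "f \<in> spanS" by (rule kloc_span)
  thus "of_int (\<rho> f) = rhoK f"
  proof (induct rule: spanS.induct)
    case (sl f) thus ?case by (simp add: rho_laurent lp)
  next
    case (sb n a k)
    have "\<rho> (zvar ^ (n * k + a) / (1 - zvar ^ n) ^ (k + 1)) = (if k = 0 \<and> a = 0 then 1 else 0)"
      using bas sb(1,2) by blast
    thus ?case unfolding rho_basis[OF sb(1,2)] by simp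
  next
    case (sadd f g) thus ?case using add span_kloc by (simp add: rho_add)
  next
    case (sscal f c) thus ?case using scal span_kloc by (simp add: rho_scal)
  qed
qed

end
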